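(* For all integers $q\ge1$ and $n\ge1$, the number of nonattacking placements of $q$ unlabelled semibishops on the $n\times n$ square board is $$u_{\mathsf Q^{01}}(q;n)=(-1)^q\sum_{k=0}^q s(n+1,n+1-k)\,s(n,n-(q-k)),$$ which is a polynomial function of $n$ of degree $2q$.
   Context: The semibishop $\mathsf Q^{01}$ is the rider with the single basic move $(1,1)$: two pieces at positions $z,z'\in[n]^2=\{1,\dots,n\}^2$ attack each other if $z'-z$ is an integer multiple of $(1,1)$ (including $z=z'$). $u_{\mathsf Q^{01}}(q;n)$ counts the sets of $q$ positions in $[n]^2$ no two of which attack each other. $s(a,b)$ denotes the signed Stirling number of the first kind, taken to be $0$ if $b<0$ or $b>a$. *)

theory Defs
  imports "HOL-Combinatorics.Stirling" "HOL-Computational_Algebra.Polynomial"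
begin

definition signed_stirling1 :: "int \<Rightarrow> int \<Rightarrow> int" where
  "signed_stirling1 a b =
     (if b < 0 \<or> b > a then 0
      else (-1) ^ nat (a - b) * int (stirling (nat a) (nat b)))"

definition board :: "nat \<Rightarrow> (int \<times> int) set" where
  "board n = {1..int n} \<times> {1..int n}"

definition semibishop_attacks :: "int \<times> int \<Rightarrow> int \<times> int \<Rightarrow> bool" where
  "semibishop_attacks z z' \<longleftrightarrow> (\<exists>m::int. fst z' - fst z = m * 1 \<and> snd z' - snd z = m * 1)"

definition u_semibishop :: "nat \<Rightarrow> nat \<Rightarrow> nat" where
  "u_semibishop q n = card {S. S \<subseteq> board n \<and> card S = q \<and>
      (\<forall>z\<in>S. \<forall>z'\<in>S. z \<noteq> z' \<longrightarrow> \<not> semibishop_attacks z z')}"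

end

theory Submission
  imports Defs
begin



lemma coeff_11_pow: "coeff ([:1,1:]^n :: rat poly) k = of_nat (n choose k)"
proof (induction n arbitrary: k)
  case 0 then show ?case by (cases k) auto
next
  case (Suc n)
  have "([:1,1:]^Suc n :: rat poly) = [:1,1:]^n + pCons 0 ([:1,1:]^n)"
    by simp
  then show ?case using Suc by (cases k) (auto simp: coeff_pCons)
qed

definition T :: "nat \<Rightarrow> rat poly" where
  "T d = [:1,1:]^(Suc d) - monom 1 (Suc d)"

lemma poly_T: "poly (T d) x = (x+1)^Suc d - x^Suc d"
  by (simp add: T_def poly_monom poly_power add.commute del: power_Suc)

lemma coeff_T: "coeff (T d) k = (if k \<le> d then of_nat (Suc d choose k) else 0)"
  by (auto simp: T_def coeff_11_pow coeff_monom simp del: power_Suc)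

lemma degree_T: "degree (T d) = d" and lc_T: "lead_coeff (T d) = of_nat (Suc d)"
proof -
  have "degree (T d) \<le> d" by (rule degree_le) (auto simp: coeff_T)
  moreover have "coeff (T d) d \<noteq> 0" by (simp add: coeff_T)
  ultimately show "degree (T d) = d" using le_degree by (metis antisym)
  then show "lead_coeff (T d) = of_nat (Suc d)" by (simp add: coeff_T)
qed

lemma psum_exists:
  fixes Q :: "rat poly"
  assumes "Q \<noteq> 0"
  shows "\<exists>R. degree R = Suc (degree Q) \<and> lead_coeff R = lead_coeff Q / of_nat (Suc (degree Q))
          \<and> (\<forall>n. poly R (of_nat n) = (\<Sum>m<n. poly Q (of_nat m)))"
  using assms
proof (induction "degree Q" arbitrary: Q rule: less_induct)
  case less
  define d where "d = degree Q"
  define c where "c = lead_coeff Q"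
  define R0 where "R0 = smult (c / of_nat (Suc d)) (monom 1 (Suc d))"
  define Q' where "Q' = Q - smult (c / of_nat (Suc d)) (T d)"
  have dR0: "degree R0 = Suc d" using less.prems
    by (simp add: R0_def c_def degree_monom_eq)
  have sR0: "poly R0 (of_nat n) = (\<Sum>m<n. poly (smult (c / of_nat (Suc d)) (T d)) (of_nat m))" for n
  proof -
    have "(\<Sum>m<n. poly (smult (c / of_nat (Suc d)) (T d)) (of_nat m))
        = (c / of_nat (Suc d)) * (\<Sum>m<n. (of_nat (Suc m))^Suc d - (of_nat m :: rat)^Suc d)"
      by (simp add: poly_T sum_distrib_left add.commute)
    also have "\<dots> = (c / of_nat (Suc d)) * (of_nat n)^Suc d"
      by (subst sum_lessThan_telescope[where f = "\<lambda>m. (of_nat m :: rat)^Suc d"]) simp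
    finally show ?thesis by (simp add: R0_def poly_monom)
  qed
  have Q'deg: "degree Q' \<le> d" unfolding Q'_def d_def
    by (metis degree_T degree_diff_le degree_smult_le le_refl order.trans)
  have Q'top: "coeff Q' d = 0"
    using less.prems by (simp add: Q'_def coeff_T c_def d_def)
  show ?case
  proof (cases "Q' = 0")
    case True
    then have QQ: "Q = smult (c / of_nat (Suc d)) (T d)" by (simp add: Q'_def)
    show ?thesis
    proof (intro exI[of _ R0] conjI allI)
      show "degree R0 = Suc (degree Q)" using dR0 d_def by simp
      show "lead_coeff R0 = lead_coeff Q / of_nat (Suc (degree Q))"
      proof -
        have "lead_coeff R0 = c / of_nat (Suc d)" using dR0 by (simp add: R0_def)
        then show ?thesis by (simp add: c_def d_def)
      qed
      fix n show "poly R0 (of_nat n) = (\<Sum>m<n. poly Q (of_nat m))"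
        using sR0 by (subst QQ) simp
    qed
  next
    case False
    have "degree Q' < d"
    proof -
      have "degree Q' \<noteq> d" using Q'top False by (metis leading_coeff_0_iff)
      then show ?thesis using Q'deg by simp
    qed
    then obtain R' where R': "degree R' = Suc (degree Q')"
      "\<forall>n. poly R' (of_nat n) = (\<Sum>m<n. poly Q' (of_nat m))"
      using less.hyps[of Q'] False d_def by blast
    have dR': "degree R' < Suc d" using R' \<open>degree Q' < d\<close> by simp
    have deg: "degree (R0 + R') = Suc d" using dR0 dR' by (simp add: degree_add_eq_left)
    show ?thesis
    proof (intro exI[of _ "R0 + R'"] conjI allI)
      show "degree (R0 + R') = Suc (degree Q)" using deg d_def by simp
      show "lead_coeff (R0 + R') = lead_coeff Q / of_nat (Suc (degree Q))"
      proof -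
        have "lead_coeff (R0 + R') = c / of_nat (Suc d)" using deg dR' by (simp add: R0_def coeff_eq_0)
        then show ?thesis by (simp add: c_def d_def)
      qed
      fix n
      have pq: "poly Q x = poly Q' x + poly (smult (c / of_nat (Suc d)) (T d)) x" for x
        by (simp add: Q'_def)
      have "(\<Sum>m<n. poly Q (of_nat m)) = (\<Sum>m<n. poly Q' (of_nat m))
           + (\<Sum>m<n. poly (smult (c / of_nat (Suc d)) (T d)) (of_nat m))"
        unfolding pq by (rule sum.distrib)
      then show "poly (R0 + R') (of_nat n) = (\<Sum>m<n. poly Q (of_nat m))"
        using R'(2) sR0 by simp
    qed
  qed
qed




definition G :: "nat \<Rightarrow> nat poly" where "G m = (\<Prod>i<m. [:1, of_nat i:])"

definition ppoly :: "nat \<Rightarrow> (nat \<Rightarrow> nat) \<Rightarrow> bool" where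
  "ppoly d f \<longleftrightarrow> (\<exists>p::rat poly. degree p = d \<and> lead_coeff p > 0 \<and> (\<forall>n. of_nat (f n) = poly p (of_nat n)))"

lemma ppoly_const: "c > 0 \<Longrightarrow> ppoly 0 (\<lambda>_. c)"
  unfolding ppoly_def by (rule exI[of _ "[:of_nat c:]"]) simp

lemma ppoly_id: "ppoly 1 (\<lambda>n. n)"
  unfolding ppoly_def by (rule exI[of _ "[:0, 1:]"]) simp

lemma ppoly_mult: "ppoly a f \<Longrightarrow> ppoly b g \<Longrightarrow> ppoly (a + b) (\<lambda>n. f n * g n)"
  unfolding ppoly_def
proof (elim exE conjE)
  fix p q :: "rat poly"
  assume p: "degree p = a" "0 < lead_coeff p" "\<forall>n. of_nat (f n) = poly p (of_nat n)"
    and q: "degree q = b" "0 < lead_coeff q" "\<forall>n. of_nat (g n) = poly q (of_nat n)"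
  have "p \<noteq> 0" "q \<noteq> 0" using p q by auto
  then show "\<exists>r::rat poly. degree r = a + b \<and> 0 < lead_coeff r \<and> (\<forall>n. of_nat (f n * g n) = poly r (of_nat n))"
  proof (intro exI[of _ "p * q"] conjI)
    show "degree (p * q) = a + b" using p q \<open>p \<noteq> 0\<close> \<open>q \<noteq> 0\<close> by (simp add: degree_mult_eq)
    show "0 < lead_coeff (p * q)" using p q by (metis lead_coeff_mult mult_pos_pos)
  qed (use p q in auto)
qed

lemma ppoly_add: "ppoly d f \<Longrightarrow> ppoly d g \<Longrightarrow> ppoly d (\<lambda>n. f n + g n)"
  unfolding ppoly_def
proof (elim exE conjE)
  fix p q :: "rat poly"
  assume p: "degree p = d" "0 < lead_coeff p" "\<forall>n. of_nat (f n) = poly p (of_nat n)"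
    and q: "degree q = d" "0 < lead_coeff q" "\<forall>n. of_nat (g n) = poly q (of_nat n)"
  have c: "coeff (p + q) d = lead_coeff p + lead_coeff q" using p q by simp
  then have "coeff (p + q) d > 0" using p q by simp
  moreover have "degree (p + q) \<le> d" using p q by (simp add: degree_add_le)
  ultimately have dd: "degree (p + q) = d"
    by (metis antisym le_degree less_irrefl)
  show "\<exists>r::rat poly. degree r = d \<and> 0 < lead_coeff r \<and> (\<forall>n. of_nat (f n + g n) = poly r (of_nat n))"
    using p q dd c by (intro exI[of _ "p + q"]) simp
qed

lemma ppoly_sum: "finite I \<Longrightarrow> I \<noteq> {} \<Longrightarrow> (\<And>i. i \<in> I \<Longrightarrow> ppoly d (f i)) \<Longrightarrow> ppoly d (\<lambda>n. \<Sum>i\<in>I. f i n)"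
proof (induction I rule: finite_ne_induct)
  case (singleton x) then show ?case by simp
next
  case (insert x F) then show ?case by (simp add: ppoly_add)
qed

lemma ppoly_shift: "ppoly d f \<Longrightarrow> ppoly d (\<lambda>n. f (Suc n))"
  unfolding ppoly_def
proof (elim exE conjE)
  fix p :: "rat poly"
  assume p: "degree p = d" "0 < lead_coeff p" "\<forall>n. of_nat (f n) = poly p (of_nat n)"
  show "\<exists>r::rat poly. degree r = d \<and> 0 < lead_coeff r \<and> (\<forall>n. of_nat (f (Suc n)) = poly r (of_nat n))"
  proof (intro exI[of _ "pcompose p [:1, 1:]"] conjI)
    show "degree (pcompose p [:1, 1:]) = d" using p by (simp add: degree_pcompose)
    have "lead_coeff (pcompose p [:1, 1:]) = lead_coeff p * lead_coeff [:1,1:] ^ degree p"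
      by (rule lead_coeff_comp) simp
    then show "0 < lead_coeff (pcompose p [:1, 1:])" using p by simp
  qed (use p in \<open>simp add: poly_pcompose add.commute\<close>)
qed

lemma ppoly_psum: "ppoly d f \<Longrightarrow> ppoly (Suc d) (\<lambda>n. \<Sum>m<n. f m)"
  unfolding ppoly_def
proof (elim exE conjE)
  fix p :: "rat poly"
  assume p: "degree p = d" "0 < lead_coeff p" "\<forall>n. of_nat (f n) = poly p (of_nat n)"
  then have "p \<noteq> 0" by auto
  then obtain R where R: "degree R = Suc (degree p)" "lead_coeff R = lead_coeff p / of_nat (Suc (degree p))"
     "\<forall>n. poly R (of_nat n) = (\<Sum>m<n. poly p (of_nat m))" using psum_exists by blast
  show "\<exists>r::rat poly. degree r = Suc d \<and> 0 < lead_coeff r \<and> (\<forall>n. of_nat (\<Sum>m<n. f m) = poly r (of_nat n))"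
    using p R by (intro exI[of _ R]) (simp add: of_nat_sum)
qed

lemma coeff_G_Suc: "coeff (G (Suc m)) (Suc j) = coeff (G m) (Suc j) + m * coeff (G m) j"
proof -
  have "G (Suc m) = [:1, of_nat m:] * G m" by (simp add: G_def mult.commute)
  then show ?thesis by simp
qed

lemma coeff_G_0: "coeff (G m) 0 = 1"
  by (induction m) (simp_all add: G_def mult.commute[of _ "[:1, _:]"])

lemma coeff_G_Suc_sum: "coeff (G n) (Suc j) = (\<Sum>m<n. m * coeff (G m) j)"
  by (induction n) (simp_all add: coeff_G_Suc G_def)

lemma ppoly_G: "ppoly (2 * j) (\<lambda>n. coeff (G n) j)"
proof (induction j)
  case 0 then show ?case by (simp add: coeff_G_0 ppoly_const)
next
  case (Suc j)
  have "ppoly (Suc (2 * j)) (\<lambda>n. n * coeff (G n) j)"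
    using ppoly_mult[OF ppoly_id Suc] by simp
  then have "ppoly (Suc (Suc (2 * j))) (\<lambda>n. \<Sum>m<n. m * coeff (G m) j)" by (rule ppoly_psum)
  then show ?case by (simp add: coeff_G_Suc_sum)
qed

lemma coeff_G_stirling: "coeff (G m) j = (if j \<le> m then stirling m (m - j) else 0)"
proof (induction m arbitrary: j)
  case 0 then show ?case by (cases j) (simp_all add: G_def)
next
  case (Suc m)
  show ?case
  proof (cases j)
    case 0 then show ?thesis by (simp add: coeff_G_0)
  next
    case (Suc i)
    show ?thesis
    proof (cases "i < m")
      case True
      then have "Suc m - j = Suc (m - Suc i)" "m - i = Suc (m - Suc i)" using Suc by auto
      then show ?thesis using True Suc by (simp add: coeff_G_Suc Suc.IH)
    next
      case False
      have z: "m * stirling m 0 = 0" by (cases m) auto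
      show ?thesis
      proof (cases "i = m")
        case True then show ?thesis using Suc z by (simp add: coeff_G_Suc Suc.IH)
      next
        case False then show ?thesis using Suc \<open>\<not> i < m\<close> by (simp add: coeff_G_Suc Suc.IH)
      qed
    qed
  qed
qed




definition FF :: "'i set \<Rightarrow> ('i \<Rightarrow> 'a set) \<Rightarrow> nat \<Rightarrow> 'a set set" where
  "FF I C q = {S. S \<subseteq> (\<Union>i\<in>I. C i) \<and> card S = q \<and> (\<forall>i\<in>I. card (S \<inter> C i) \<le> 1)}"

lemma FF_finite: "finite I \<Longrightarrow> (\<forall>i\<in>I. finite (C i)) \<Longrightarrow> finite (FF I C q)"
  unfolding FF_def by (rule finite_subset[of _ "Pow (\<Union>i\<in>I. C i)"]) auto

lemma count_FF:
  assumes "finite I" "\<forall>i\<in>I. finite (C i)" "\<forall>i\<in>I. \<forall>j\<in>I. i \<noteq> j \<longrightarrow> C i \<inter> C j = {}"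
  shows "card (FF I C q) = coeff (\<Prod>i\<in>I. [:1, card (C i):]) q"
  using assms
proof (induction I arbitrary: q rule: finite_induct)
  case empty
  have "FF {} C q = (if q = 0 then {{}} else {})" by (auto simp: FF_def)
  then show ?case by simp
next
  case (insert x I)
  let ?U = "\<Union>i\<in>I. C i"
  have fin: "finite (C x)" "\<forall>i\<in>I. finite (C i)" using insert.prems by auto
  have dis: "\<forall>i\<in>I. \<forall>j\<in>I. i \<noteq> j \<longrightarrow> C i \<inter> C j = {}" using insert.prems by auto
  have dx: "C x \<inter> C i = {}" if "i \<in> I" for i using insert.prems insert.hyps that by auto
  have finU: "finite ?U" using fin insert.hyps by auto
  let ?A = "{S \<in> FF (insert x I) C q. S \<inter> C x = {}}"
  let ?B = "{S \<in> FF (insert x I) C q. S \<inter> C x \<noteq> {}}"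
  have split: "FF (insert x I) C q = ?A \<union> ?B" by auto
  have finF: "finite (FF (insert x I) C q)" using FF_finite insert.hyps insert.prems by blast
  have A: "?A = FF I C q"
  proof
    show "?A \<subseteq> FF I C q" unfolding FF_def by auto
    show "FF I C q \<subseteq> ?A"
    proof
      fix S assume S: "S \<in> FF I C q"
      then have "S \<inter> C x = {}" using dx unfolding FF_def by blast
      then show "S \<in> ?A" using S unfolding FF_def by auto
    qed
  qed
  have B: "card ?B = (case q of 0 \<Rightarrow> 0 | Suc k \<Rightarrow> card (C x) * card (FF I C k))"
  proof (cases q)
    case 0
    have e: "?B = {}"
    proof -
      have False if S: "S \<in> FF (insert x I) C q" "S \<inter> C x \<noteq> {}" for S
      proof -
        have "finite S" using S finU fin unfolding FF_def by (auto intro: finite_subset)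
        then show False using S 0 unfolding FF_def by auto
      qed
      then show ?thesis by blast
    qed
    show ?thesis unfolding e using 0 by simp
  next
    case (Suc k)
    have img: "?B = (\<lambda>(c, T). insert c T) ` (C x \<times> FF I C k)"
    proof
      show "?B \<subseteq> (\<lambda>(c, T). insert c T) ` (C x \<times> FF I C k)"
      proof
        fix S assume S: "S \<in> ?B"
        have finS: "finite S" using S finU fin unfolding FF_def by (auto intro: finite_subset)
        obtain c where c: "c \<in> S" "c \<in> C x" using S by blast
        have le: "card (S \<inter> C x) \<le> 1" using S unfolding FF_def by auto
        have Sx: "S \<inter> C x = {c}"
        proof -
          have "\<forall>a\<in>S \<inter> C x. \<forall>b\<in>S \<inter> C x. a = b"
            using le finS card_le_Suc0_iff_eq[of "S \<inter> C x"] by simp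
          then show ?thesis using c by blast
        qed
        let ?T = "S - {c}"
        have "?T \<in> FF I C k"
          unfolding FF_def
        proof (intro CollectI conjI ballI)
          show "?T \<subseteq> ?U" using S Sx unfolding FF_def by blast
          show "card ?T = k" using S c finS Suc unfolding FF_def by simp
          fix i assume i: "i \<in> I"
          have "card (?T \<inter> C i) \<le> card (S \<inter> C i)" by (rule card_mono) (use finS in auto)
          moreover have "card (S \<inter> C i) \<le> 1" using S i unfolding FF_def by auto
          ultimately show "card (?T \<inter> C i) \<le> 1" by linarith
        qed
        moreover have "S = insert c ?T" using c by blast
        ultimately show "S \<in> (\<lambda>(c, T). insert c T) ` (C x \<times> FF I C k)" using c by blast
      qed
      show "(\<lambda>(c, T). insert c T) ` (C x \<times> FF I C k) \<subseteq> ?B"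
      proof safe
        fix c T assume c: "c \<in> C x" and T: "T \<in> FF I C k"
        have TU: "T \<subseteq> ?U" using T unfolding FF_def by auto
        have cT: "c \<notin> T" using TU c dx by blast
        have finT: "finite T" using TU finU by (auto intro: finite_subset)
        have TCx: "T \<inter> C x = {}" using TU dx by blast
        show "insert c T \<in> FF (insert x I) C q"
          unfolding FF_def
        proof (intro CollectI conjI ballI)
          show "insert c T \<subseteq> (\<Union>i\<in>insert x I. C i)" using TU c by auto
          show "card (insert c T) = q" using cT finT T Suc unfolding FF_def by simp
          fix i assume i: "i \<in> insert x I"
          show "card (insert c T \<inter> C i) \<le> 1"
          proof (cases "i = x")
            case True
            then have "insert c T \<inter> C i = {c}" using TCx c by blast
            then show ?thesis by simp
          next
            case False
            then have "i \<in> I" using i by simp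
            then have "insert c T \<inter> C i = T \<inter> C i" using c dx by blast
            then show ?thesis using T \<open>i \<in> I\<close> unfolding FF_def by simp
          qed
        qed
        show "insert c T \<inter> C x = {} \<Longrightarrow> False" using c by blast
      qed
    qed
    have inj: "inj_on (\<lambda>(c, T). insert c T) (C x \<times> FF I C k)"
    proof (rule inj_onI, clarify)
      fix c T c' T' assume c: "c \<in> C x" "T \<in> FF I C k" "c' \<in> C x" "T' \<in> FF I C k"
        and eq: "insert c T = insert c' T'"
      have "T \<inter> C x = {}" "T' \<inter> C x = {}" using c dx unfolding FF_def by blast+
      then have "c = c'" using eq c by blast
      moreover have "c \<notin> T" "c' \<notin> T'" using c \<open>T \<inter> C x = {}\<close> \<open>T' \<inter> C x = {}\<close> by blast+
      ultimately show "c = c' \<and> T = T'" using eq by (metis insert_ident)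
    qed
    have "card ?B = card (C x \<times> FF I C k)" unfolding img by (rule card_image[OF inj])
    then show ?thesis using Suc by (simp add: card_cartesian_product)
  qed
  have "card (FF (insert x I) C q) = card ?A + card ?B"
    using finF by (subst split) (rule card_Un_disjoint, auto)
  also have "\<dots> = coeff (\<Prod>i\<in>I. [:1, card (C i):]) q
      + (case q of 0 \<Rightarrow> 0 | Suc k \<Rightarrow> card (C x) * coeff (\<Prod>i\<in>I. [:1, card (C i):]) k)"
    using A B insert.IH[OF fin(2) dis] by (simp split: nat.split)
  also have "\<dots> = coeff (\<Prod>i\<in>insert x I. [:1, card (C i):]) q"
    using insert.hyps by (simp add: coeff_pCons split: nat.split)
  finally show ?case .
qed




definition Idx :: "nat \<Rightarrow> int set" where "Idx n = {-(int n - 1) .. int n - 1}"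
definition Dg :: "nat \<Rightarrow> int \<Rightarrow> (int \<times> int) set" where
  "Dg n d = {z \<in> board n. fst z - snd z = d}"

lemma finite_board: "finite (board n)" by (simp add: board_def)

lemma attacks_iff: "semibishop_attacks z z' \<longleftrightarrow> fst z - snd z = fst z' - snd z'"
  unfolding semibishop_attacks_def by auto

lemma union_Dg: "(\<Union>d\<in>Idx n. Dg n d) = board n"
  by (auto simp: Dg_def Idx_def board_def)

lemma Dg_image: "Dg n d = (\<lambda>y. (y + d, y)) ` {max 1 (1-d) .. min (int n) (int n - d)}"
  by (auto simp: Dg_def board_def image_iff)

lemma card_Dg: "d \<in> Idx n \<Longrightarrow> card (Dg n d) = nat (int n - \<bar>d\<bar>)"
proof -
  assume d: "d \<in> Idx n"
  have "inj_on (\<lambda>y. (y + d, y)) {max 1 (1-d) .. min (int n) (int n - d)}" by (auto intro: inj_onI)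
  then have "card (Dg n d) = card {max 1 (1-d) .. min (int n) (int n - d)}"
    by (simp add: Dg_image card_image)
  also have "\<dots> = nat (int n - \<bar>d\<bar>)" using d by (simp add: Idx_def)
  finally show ?thesis .
qed

lemma nonattack_iff:
  assumes S: "S \<subseteq> board n"
  shows "(\<forall>z\<in>S. \<forall>z'\<in>S. z \<noteq> z' \<longrightarrow> \<not> semibishop_attacks z z') \<longleftrightarrow> (\<forall>d\<in>Idx n. card (S \<inter> Dg n d) \<le> 1)"
proof
  have finS: "finite S" using S finite_board finite_subset by blast
  assume H: "\<forall>z\<in>S. \<forall>z'\<in>S. z \<noteq> z' \<longrightarrow> \<not> semibishop_attacks z z'"
  show "\<forall>d\<in>Idx n. card (S \<inter> Dg n d) \<le> 1"
  proof
    fix d assume "d \<in> Idx n"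
    have "\<forall>a\<in>S \<inter> Dg n d. \<forall>b\<in>S \<inter> Dg n d. a = b"
      using H by (auto simp: Dg_def attacks_iff)
    then show "card (S \<inter> Dg n d) \<le> 1" using finS card_le_Suc0_iff_eq[of "S \<inter> Dg n d"] by simp
  qed
next
  have finS: "finite S" using S finite_board finite_subset by blast
  assume H: "\<forall>d\<in>Idx n. card (S \<inter> Dg n d) \<le> 1"
  show "\<forall>z\<in>S. \<forall>z'\<in>S. z \<noteq> z' \<longrightarrow> \<not> semibishop_attacks z z'"
  proof (intro ballI impI notI)
    fix z z' assume z: "z \<in> S" "z' \<in> S" "z \<noteq> z'" "semibishop_attacks z z'"
    define d where "d = fst z - snd z"
    have "z \<in> board n" using z S by blast
    then have d: "d \<in> Idx n" by (auto simp: d_def Idx_def board_def)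
    have "z \<in> S \<inter> Dg n d" "z' \<in> S \<inter> Dg n d" using z S by (auto simp: Dg_def d_def attacks_iff)
    moreover have "card (S \<inter> Dg n d) \<le> Suc 0" using H d by simp
    ultimately show False using finS z(3) card_le_Suc0_iff_eq[of "S \<inter> Dg n d"] by auto
  qed
qed

lemma u_FF: "u_semibishop q n = card (FF (Idx n) (Dg n) q)"
proof -
  have "{S. S \<subseteq> board n \<and> card S = q \<and>
      (\<forall>z\<in>S. \<forall>z'\<in>S. z \<noteq> z' \<longrightarrow> \<not> semibishop_attacks z z')} = FF (Idx n) (Dg n) q"
    unfolding FF_def union_Dg
  proof (rule Collect_cong)
    fix S show "(S \<subseteq> board n \<and> card S = q \<and> (\<forall>z\<in>S. \<forall>z'\<in>S. z \<noteq> z' \<longrightarrow> \<not> semibishop_attacks z z')) =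
        (S \<subseteq> board n \<and> card S = q \<and> (\<forall>i\<in>Idx n. card (S \<inter> Dg n i) \<le> 1))"
      using nonattack_iff[of S n] by blast
  qed
  then show ?thesis by (simp add: u_semibishop_def)
qed

lemma u_coeff: "u_semibishop q n = coeff (\<Prod>d\<in>Idx n. [:1, nat (int n - \<bar>d\<bar>):]) q"
proof -
  have "u_semibishop q n = coeff (\<Prod>d\<in>Idx n. [:1, card (Dg n d):]) q"
    unfolding u_FF
  proof (rule count_FF)
    show "finite (Idx n)" by (simp add: Idx_def)
    show "\<forall>i\<in>Idx n. finite (Dg n i)" using finite_board by (auto simp: Dg_def)
    show "\<forall>i\<in>Idx n. \<forall>j\<in>Idx n. i \<noteq> j \<longrightarrow> Dg n i \<inter> Dg n j = {}" by (auto simp: Dg_def)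
  qed
  also have "\<dots> = coeff (\<Prod>d\<in>Idx n. [:1, nat (int n - \<bar>d\<bar>):]) q"
    by (rule arg_cong[where f="\<lambda>p. coeff p q"], rule prod.cong, simp, simp add: card_Dg)
  finally show ?thesis .
qed

lemma P1: "(\<Prod>d\<in>{0 .. int n - 1}. (g (nat (int n - \<bar>d\<bar>)) :: 'a :: comm_monoid_mult)) = (\<Prod>i<n. g (Suc i))"
    apply (rule prod.reindex_bij_witness[where i = "\<lambda>i. int n - 1 - int i" and j = "\<lambda>d. nat (int n - 1 - d)"])
    apply auto
  apply (rule arg_cong[where f = g])
  apply arith
  done
lemma P2: "n \<ge> 1 \<Longrightarrow> (\<Prod>d\<in>{-(int n - 1) .. -1}. (g (nat (int n - \<bar>d\<bar>)) :: 'a :: comm_monoid_mult)) = (\<Prod>i<n - 1. g (Suc i))"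
    apply (rule prod.reindex_bij_witness[where i = "\<lambda>i. int i + 1 - int n" and j = "\<lambda>d. nat (d + int n - 1)"])
    apply auto
  apply (rule arg_cong[where f = g])
  apply arith
  done

lemma prod_Idx:
  assumes "n \<ge> 1"
  shows "(\<Prod>d\<in>Idx n. [:1, nat (int n - \<bar>d\<bar>):]) = G (Suc n) * G n"
proof -
  let ?h = "\<lambda>i::nat. [:1, i:] :: nat poly"
  have Isplit: "Idx n = {0 .. int n - 1} \<union> {-(int n - 1) .. -1}" by (auto simp: Idx_def)
  have P1: "(\<Prod>d\<in>{0 .. int n - 1}. ?h (nat (int n - \<bar>d\<bar>))) = (\<Prod>i<n. ?h (Suc i))"
    by (rule P1)
  have P2: "(\<Prod>d\<in>{-(int n - 1) .. -1}. ?h (nat (int n - \<bar>d\<bar>))) = (\<Prod>i<n - 1. ?h (Suc i))"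
    by (rule P2[OF assms])
  have h0: "[:1, 0:] = (1::nat poly)" unfolding one_pCons by simp
  have G1: "G (Suc n) = (\<Prod>i<n. ?h (Suc i))"
    unfolding G_def by (subst prod.lessThan_Suc_shift) (simp only: of_nat_id h0 mult_1_left)
  obtain m where m: "n = Suc m" using assms by (cases n) auto
  have G2: "G n = (\<Prod>i<n - 1. ?h (Suc i))"
    unfolding G_def m by (subst prod.lessThan_Suc_shift) (simp only: of_nat_id h0 mult_1_left diff_Suc_1)
  have "(\<Prod>d\<in>Idx n. ?h (nat (int n - \<bar>d\<bar>))) =
        (\<Prod>d\<in>{0 .. int n - 1}. ?h (nat (int n - \<bar>d\<bar>))) * (\<Prod>d\<in>{-(int n - 1) .. -1}. ?h (nat (int n - \<bar>d\<bar>)))"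
    unfolding Isplit by (rule prod.union_disjoint) auto
  then show ?thesis by (simp only: P1 P2 G1 G2)
qed




lemma ss: "signed_stirling1 (int m) (int m - int j) = (-1)^j * int (coeff (G m) j)"
proof (cases "j \<le> m")
  case True
  then have "nat (int m - int j) = m - j" by simp
  then show ?thesis using True by (simp add: signed_stirling1_def coeff_G_stirling)
next
  case False
  then show ?thesis by (simp add: signed_stirling1_def coeff_G_stirling)
qed

lemma u_sum: "n \<ge> 1 \<Longrightarrow> u_semibishop q n = (\<Sum>k\<le>q. coeff (G (Suc n)) k * coeff (G n) (q - k))"
  by (simp only: u_coeff prod_Idx coeff_mult)

theorem theorem7p2:
  fixes q :: nat
  assumes "q \<ge> 1"
  shows "(\<forall>n::nat. n \<ge> 1 \<longrightarrow>
            int (u_semibishop q n) =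
              (-1) ^ q * (\<Sum>k = 0..q. signed_stirling1 (int n + 1) (int n + 1 - int k) *
                                       signed_stirling1 (int n) (int n - (int q - int k))))
       \<and> (\<exists>p :: rat poly. degree p = 2 * q \<and>
            (\<forall>n::nat. n \<ge> 1 \<longrightarrow> of_nat (u_semibishop q n) = poly p (of_nat n)))"
proof (intro conjI allI impI)
  fix n :: nat assume n: "n \<ge> 1"
  have trm: "signed_stirling1 (int n + 1) (int n + 1 - int k) * signed_stirling1 (int n) (int n - (int q - int k))
      = (-1)^q * int (coeff (G (Suc n)) k * coeff (G n) (q - k))" if k: "k \<in> {0..q}" for k
  proof -
    have e1: "signed_stirling1 (int n + 1) (int n + 1 - int k) = (-1)^k * int (coeff (G (Suc n)) k)"
      using ss[of "Suc n" k] by (simp add: add.commute)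
    have e2: "signed_stirling1 (int n) (int n - (int q - int k)) = (-1)^(q-k) * int (coeff (G n) (q - k))"
      using ss[of n "q - k"] k by (simp add: of_nat_diff)
    have "(-1::int)^k * (-1)^(q-k) = (-1)^q" using k by (simp flip: power_add)
    then show ?thesis unfolding e1 e2 by (simp add: algebra_simps)
  qed
  have sq: "(-1::int)^q * (-1)^q = 1" by (simp flip: power_add)
  have "(-1) ^ q * (\<Sum>k = 0..q. signed_stirling1 (int n + 1) (int n + 1 - int k) *
                                       signed_stirling1 (int n) (int n - (int q - int k)))
      = (-1)^q * (\<Sum>k = 0..q. (-1)^q * int (coeff (G (Suc n)) k * coeff (G n) (q - k)))"
    using trm by simp
  also have "\<dots> = (\<Sum>k \<le> q. int (coeff (G (Suc n)) k * coeff (G n) (q - k)))"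
    by (simp add: sum_distrib_left atLeast0AtMost flip: mult.assoc add: sq)
  also have "\<dots> = int (u_semibishop q n)" using u_sum[OF n] by (simp add: of_nat_sum)
  finally show "int (u_semibishop q n) = (-1) ^ q * (\<Sum>k = 0..q. signed_stirling1 (int n + 1) (int n + 1 - int k) *
                                       signed_stirling1 (int n) (int n - (int q - int k)))" by simp
next
  have "ppoly (2 * q) (\<lambda>n. \<Sum>k\<le>q. coeff (G (Suc n)) k * coeff (G n) (q - k))"
  proof (rule ppoly_sum)
    fix k assume k: "k \<in> {..q}"
    have "ppoly (2 * k + 2 * (q - k)) (\<lambda>n. coeff (G (Suc n)) k * coeff (G n) (q - k))"
      by (rule ppoly_mult[OF ppoly_shift[OF ppoly_G] ppoly_G])
    moreover have "2 * k + 2 * (q - k) = 2 * q" using k by simp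
    ultimately show "ppoly (2 * q) (\<lambda>n. coeff (G (Suc n)) k * coeff (G n) (q - k))" by simp
  qed auto
  then obtain p :: "rat poly" where p: "degree p = 2 * q"
    "\<forall>n. of_nat (\<Sum>k\<le>q. coeff (G (Suc n)) k * coeff (G n) (q - k)) = poly p (of_nat n)"
    unfolding ppoly_def by blast
  show "\<exists>p :: rat poly. degree p = 2 * q \<and>
            (\<forall>n::nat. n \<ge> 1 \<longrightarrow> of_nat (u_semibishop q n) = poly p (of_nat n))"
    using p u_sum by (intro exI[of _ p]) auto
qed


end
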